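(* Fix integers $D\ge1$, $\bar L\ge1$, a probability law $P_L$ on $\{1,\dots,\bar L\}$, and measurable weight functions $g_\nu:\{1,\dots,L\}\times\mathbb R^L\to[0,\infty)$ (for each $L$) such that for every $k^*\in\mathbb R^D$, every $L$ and every $\epsilon$, $x\mapsto g_\nu(\epsilon,\frac1{\sqrt D}xk^* )\prod_{\ell=1}^L\mathcal N(x_\ell;0,I_D)$ is a probability density on $\mathbb R^{L\times D}$. Assume there is a constant $c_\nu\ge 0$ such that for all $L$, all $\epsilon,\epsilon'\in\{1,\dots,L\}$ and all $\chi\in\mathbb R^L$, $$\frac{g_\nu(\epsilon,\chi)}{g_\nu(\epsilon',\chi)}=e^{c_\nu(\chi_\epsilon-\chi_{\epsilon'})}.$$ Let $k^*,v^*\in\mathbb R^D$ be arbitrary and generate $(L,\epsilon^*,X,y)$ by: $L\sim P_L$; $\epsilon^*\sim\mathrm{Unif}(\{1,\dots,L\})$ given $L$; $X\in\mathbb R^{L\times D}$ with density $g_\nu(\epsilon^*,\frac1{\sqrt D}xk^* )\prod_{\ell}\mathcal N(x_\ell;0,I_D)$ given $(L,\epsilon^* )$; and $y=\frac1{\sqrt D}X_{\epsilon^*}v^*$. For $k,v\in\mathbb R^D$ define the softmax attention predictor $f_{k,v}(X)=\mathrm{softmax}(\chi)^\top z$ with $\chi=\frac1{\sqrt D}Xk\in\mathbb R^L$, $z=\frac1{\sqrt D}Xv\in\mathbb R^L$ and $\mathrm{softmax}(\chi)_\ell=e^{\chi_\ell}/\sum_{\ell'=1}^Le^{\chi_{\ell'}}$.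 Then $$\min_{(k,v)\in(\mathbb R^D)^2}\mathbb E\big[(y-f_{k,v}(X))^2\big]=\mathbb E\big[(y-\mathbb E[y\mid X,L,k^*,v^*])^2\big],$$ where both expectations are over $(L,\epsilon^*,X)$ with $k^*,v^*$ fixed; i.e. the softmax attention class attains the Bayes risk.
   Context: $\mathcal N(x;\omega,V)$ is the Gaussian density. The condition on $g_\nu$ holds for instance for the spiked model $g_\nu(\epsilon,\chi)=e^{\sqrt\nu\chi_\epsilon-\nu/2}$ and the maximum-correlation model $g_\nu(\epsilon,\chi)=Le^{\nu\chi_\epsilon}/\sum_\ell e^{\nu\chi_\ell}$. *)

theory Defs
  imports "HOL-Probability.Probability"
begin

text \<open>Matrices X in R^{L x D} are functions on index pairs (l,d), rows l in {1..L},
 columns d in {1..D}. Vectors in R^D are functions nat => real, components 1..D.\<close>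

definition proj :: "nat \<Rightarrow> nat \<Rightarrow> (nat \<times> nat \<Rightarrow> real) \<Rightarrow> (nat \<Rightarrow> real) \<Rightarrow> (nat \<Rightarrow> real)" where
  "proj D L X w = restrict (\<lambda>l. (\<Sum>d=1..D. X (l, d) * w d) / sqrt (real D)) {1..L}"

definition gauss_dens :: "nat \<Rightarrow> nat \<Rightarrow> (nat \<times> nat \<Rightarrow> real) \<Rightarrow> real" where
  "gauss_dens D L X = (\<Prod>l=1..L. \<Prod>d=1..D. std_normal_density (X (l, d)))"

definition leb_mat :: "nat \<Rightarrow> nat \<Rightarrow> (nat \<times> nat \<Rightarrow> real) measure" where
  "leb_mat D L = PiM ({1..L} \<times> {1..D}) (\<lambda>_. lborel)"

definition softmax_pred :: "nat \<Rightarrow> nat \<Rightarrow> (nat \<Rightarrow> real) \<Rightarrow> (nat \<Rightarrow> real) \<Rightarrow> (nat \<times> nat \<Rightarrow> real) \<Rightarrow> real" where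
  "softmax_pred D L k v X =
     (\<Sum>l=1..L. exp (proj D L X k l) / (\<Sum>l'=1..L. exp (proj D L X k l')) * proj D L X v l)"

text \<open>Common sample space for (L, eps, X); X is padded with zeros outside {1..L} x {1..D}.\<close>
definition sample_space :: "(nat \<times> nat \<times> (nat \<times> nat \<Rightarrow> real)) measure" where
  "sample_space = count_space UNIV \<Otimes>\<^sub>M count_space UNIV \<Otimes>\<^sub>M PiM UNIV (\<lambda>_. (borel :: real measure))"

definition pad :: "nat \<Rightarrow> nat \<Rightarrow> (nat \<times> nat \<Rightarrow> real) \<Rightarrow> (nat \<times> nat \<Rightarrow> real)" where
  "pad D L X = (\<lambda>(l, d). if l \<in> {1..L} \<and> d \<in> {1..D} then X (l, d) else 0)"

definition joint_law ::
  "nat pmf \<Rightarrow> (nat \<Rightarrow> nat \<Rightarrow> (nat \<Rightarrow> real) \<Rightarrow> real) \<Rightarrow> nat \<Rightarrow> (nat \<Rightarrow> real)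
    \<Rightarrow> (nat \<times> nat \<times> (nat \<times> nat \<Rightarrow> real)) measure" where
  "joint_law PL g D kstar =
     bind (measure_pmf PL) (\<lambda>L.
       bind (measure_pmf (pmf_of_set {1..L})) (\<lambda>e.
         distr (density (leb_mat D L) (\<lambda>X. ennreal (g L e (proj D L X kstar) * gauss_dens D L X)))
               sample_space (\<lambda>X. (L, e, pad D L X))))"

definition target :: "nat \<Rightarrow> (nat \<Rightarrow> real) \<Rightarrow> nat \<times> nat \<times> (nat \<times> nat \<Rightarrow> real) \<Rightarrow> real" where
  "target D vstar \<omega> = (case \<omega> of (L, e, X) \<Rightarrow> (\<Sum>d=1..D. X (e, d) * vstar d) / sqrt (real D))"

definition obs_algebra :: "(nat \<times> nat \<times> (nat \<times> nat \<Rightarrow> real)) measure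
    \<Rightarrow> (nat \<times> nat \<times> (nat \<times> nat \<Rightarrow> real)) measure" where
  "obs_algebra M = vimage_algebra (space M) (\<lambda>\<omega>. (fst \<omega>, snd (snd \<omega>)))
      (count_space UNIV \<Otimes>\<^sub>M PiM UNIV (\<lambda>_. (borel :: real measure)))"

end

theory Submission
  imports Defs
begin

lemma bind_measure_pmf_cong_support:
  assumes S: "\<And>x. sets (f x) = sets (f' x)" and E: "\<And>x. x \<in> set_pmf p \<Longrightarrow> f x = f' x"
  shows "bind (measure_pmf p) f = bind (measure_pmf p) f'"
proof -
  let ?x = "SOME x. x \<in> space (measure_pmf p)"
  have sa: "subprob_algebra (f ?x) = subprob_algebra (f' ?x)"
    by (rule subprob_algebra_cong) (rule S)
  have fe: "(\<lambda>A. emeasure (measure_pmf p) (f -` A \<inter> space (measure_pmf p))) =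
        (\<lambda>A. emeasure (measure_pmf p) (f' -` A \<inter> space (measure_pmf p)))"
  proof
    fix A
    have "f -` A \<inter> space (measure_pmf p) \<inter> set_pmf p = f' -` A \<inter> space (measure_pmf p) \<inter> set_pmf p"
      using E by auto
    then show "emeasure (measure_pmf p) (f -` A \<inter> space (measure_pmf p)) =
        emeasure (measure_pmf p) (f' -` A \<inter> space (measure_pmf p))"
      by (metis emeasure_Int_set_pmf)
  qed
  have "distr (measure_pmf p) (subprob_algebra (f ?x)) f = distr (measure_pmf p) (subprob_algebra (f' ?x)) f'"
    unfolding distr_def sa fe ..
  then show ?thesis by (simp add: bind_def)
qed

lemma nn_integral_PiM_scale:
  fixes c :: real
  assumes c: "c > 0" and I: "finite I"
    and f: "f \<in> borel_measurable (PiM I (\<lambda>_. lborel))"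
  shows "(\<integral>\<^sup>+x. f (\<lambda>i\<in>I. c * x i) \<partial>PiM I (\<lambda>_. lborel))
     = ennreal ((1/c) ^ card I) * (\<integral>\<^sup>+x. f x \<partial>PiM I (\<lambda>_. lborel))"
  using I f
proof (induction I arbitrary: f rule: finite_induct)
  case empty
  interpret product_sigma_finite "\<lambda>_::'a. lborel" by unfold_locales
  have r: "(\<lambda>i\<in>{}. c * x i) = (\<lambda>_. undefined)" for x :: "'a \<Rightarrow> real" by auto
  show ?case by (simp add: r PiM_empty nn_integral_count_space_finite)
next
  case (insert i I)
  interpret product_sigma_finite "\<lambda>_::'a. lborel" by unfold_locales
  note insert.prems[measurable]
  have sc[measurable]: "(\<lambda>x. \<lambda>j\<in>J. c * x j) \<in> measurable (PiM J (\<lambda>_. lborel)) (PiM J (\<lambda>_. lborel))" for J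
    by (rule measurable_restrict) auto
  have fsc[measurable]: "(\<lambda>x. f (\<lambda>j\<in>insert i I. c * x j)) \<in> borel_measurable (PiM (insert i I) (\<lambda>_. lborel))"
    using measurable_compose[OF sc insert.prems] .
  define H where "H z = (\<integral>\<^sup>+ y. f (z(i := y)) \<partial>lborel)" for z
  have Hm: "H \<in> borel_measurable (PiM I (\<lambda>_. lborel))"
    unfolding H_def
    apply (rule lborel.borel_measurable_nn_integral)
    using measurable_compose[OF measurable_add_dim[of i I "\<lambda>_. lborel"] insert.prems]
    by (simp add: split_beta' case_prod_beta)
  have re: "(\<lambda>j\<in>insert i I. c * (x(i := y)) j) = (\<lambda>j\<in>I. c * x j)(i := c * y)" for x y
    using insert.hyps by (auto simp: restrict_def)
  have inner: "(\<integral>\<^sup>+ y. f ((\<lambda>j\<in>I. c * x j)(i := c * y)) \<partial>lborel) = ennreal (1/c) * H (\<lambda>j\<in>I. c * x j)" for x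
  proof -
    let ?F = "\<lambda>y. f ((\<lambda>j\<in>I. c * x j)(i := y))"
    have "(\<lambda>y. (\<lambda>j\<in>I. c * x j)(i := y)) \<in> measurable lborel (PiM (insert i I) (\<lambda>_. lborel))"
      by (rule measurable_component_update) (auto simp: space_PiM insert.hyps)
    then have "?F \<in> borel_measurable lborel"
      using measurable_compose insert.prems by blast
    then have Fm: "?F \<in> borel_measurable borel" by simp
    have "H (\<lambda>j\<in>I. c * x j) = ennreal c * (\<integral>\<^sup>+ y. ?F (0 + c * y) \<partial>lborel)"
      unfolding H_def using nn_integral_real_affine[OF Fm, of c 0] c by simp
    then show ?thesis using c
      by (simp add: ennreal_mult'[symmetric] mult.assoc[symmetric] flip: ennreal_mult)
  qed
  have "(\<integral>\<^sup>+x. f (\<lambda>j\<in>insert i I. c * x j) \<partial>PiM (insert i I) (\<lambda>_. lborel))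
     = (\<integral>\<^sup>+ x. (\<integral>\<^sup>+ y. f (\<lambda>j\<in>insert i I. c * (x(i := y)) j) \<partial>lborel) \<partial>PiM I (\<lambda>_. lborel))"
    by (rule product_nn_integral_insert[OF insert.hyps fsc])
  also have "\<dots> = (\<integral>\<^sup>+ x. ennreal (1/c) * H (\<lambda>j\<in>I. c * x j) \<partial>PiM I (\<lambda>_. lborel))"
    by (simp only: re inner)
  also have "\<dots> = ennreal (1/c) * (\<integral>\<^sup>+ x. H (\<lambda>j\<in>I. c * x j) \<partial>PiM I (\<lambda>_. lborel))"
    by (rule nn_integral_cmult) (use Hm sc in measurable)
  also have "\<dots> = ennreal (1/c) * (ennreal ((1/c) ^ card I) * (\<integral>\<^sup>+ x. H x \<partial>PiM I (\<lambda>_. lborel)))"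
    using insert.IH[OF Hm] by (simp only:)
  also have "(\<integral>\<^sup>+ x. H x \<partial>PiM I (\<lambda>_. lborel)) = (\<integral>\<^sup>+x. f x \<partial>PiM (insert i I) (\<lambda>_. lborel))"
    unfolding H_def by (rule product_nn_integral_insert[symmetric]) (use insert in auto)
  finally show ?case using insert.hyps c
    by (simp add: mult.assoc[symmetric] ennreal_mult'[symmetric] flip: ennreal_mult)
qed

definition projv :: "nat \<Rightarrow> (nat \<times> nat \<Rightarrow> real) \<Rightarrow> (nat \<Rightarrow> real) \<Rightarrow> nat \<Rightarrow> real" where
  "projv D X w l = (\<Sum>d=1..D. X (l, d) * w d) / sqrt (real D)"

lemma proj_apply: "l \<in> {1..L} \<Longrightarrow> proj D L X w l = projv D X w l"
  by (simp add: proj_def projv_def)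

lemma softmax_pred_eq: "softmax_pred D L k v X =
   (\<Sum>l=1..L. exp (projv D X k l) / (\<Sum>l'=1..L. exp (projv D X k l')) * projv D X v l)"
  unfolding softmax_pred_def
  by (intro sum.cong refl) (simp add: proj_apply)

lemma projv_pad: "l \<in> {1..L} \<Longrightarrow> projv D (pad D L X) w l = projv D X w l"
  unfolding projv_def pad_def by (intro arg_cong2[where f="(/)"] sum.cong) auto

lemma proj_pad: "proj D L (pad D L X) w = proj D L X w"
  unfolding proj_def by (intro restrict_ext) (use projv_pad[unfolded projv_def] in auto)

lemma softmax_pred_pad: "softmax_pred D L k v (pad D L X) = softmax_pred D L k v X"
  unfolding softmax_pred_def proj_pad ..

lemma target_pad: "e \<in> {1..L} \<Longrightarrow> target D v (L, e, pad D L X) = projv D X v e"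
  unfolding target_def using projv_pad[of e L D X v] by (simp add: projv_def)

lemma space_leb_mat: "space (leb_mat D L) = PiE ({1..L} \<times> {1..D}) (\<lambda>_. UNIV)"
  by (simp add: leb_mat_def space_PiM)

lemma projv_meas_leb[measurable]:
  assumes "l \<in> {1..L}"
  shows "(\<lambda>X. projv D X w l) \<in> borel_measurable (leb_mat D L)"
  unfolding projv_def leb_mat_def
  by (intro borel_measurable_divide borel_measurable_sum borel_measurable_times measurable_const)
     (use assms in \<open>auto intro!: measurable_PiM_component_rev\<close>)

lemma proj_meas_leb:
  "(\<lambda>X. proj D L X w) \<in> measurable (leb_mat D L) (PiM {1..L} (\<lambda>_. borel))"
  unfolding proj_def
  by (rule measurable_restrict) (use projv_meas_leb[unfolded projv_def] in auto)

lemma gauss_meas[measurable]: "gauss_dens D L \<in> borel_measurable (leb_mat D L)"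
  unfolding gauss_dens_def leb_mat_def
  by (intro borel_measurable_prod) (auto intro!: measurable_compose[OF _ borel_measurable_normal_density] measurable_PiM_component_rev)

lemma projv_meas_U[measurable]:
  "(\<lambda>X. projv D X w l) \<in> borel_measurable (PiM UNIV (\<lambda>_. (borel :: real measure)))"
  unfolding projv_def by measurable

lemma softmax_meas_U[measurable]:
  "softmax_pred D L k v \<in> borel_measurable (PiM UNIV (\<lambda>_. (borel :: real measure)))"
  unfolding softmax_pred_eq by measurable

lemma pad_meas[measurable]: "pad D L \<in> measurable (leb_mat D L) (PiM UNIV (\<lambda>_. (borel :: real measure)))"
proof -
  have "(\<lambda>X i. pad D L X i) \<in> measurable (leb_mat D L) (PiM UNIV (\<lambda>_. (borel :: real measure)))"
  proof (rule measurable_PiM_single')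
    fix i :: "nat \<times> nat"
    obtain l d where i: "i = (l, d)" by force
    show "(\<lambda>X. pad D L X i) \<in> borel_measurable (leb_mat D L)"
    proof (cases "l \<in> {1..L} \<and> d \<in> {1..D}")
      case True
      then show ?thesis unfolding i pad_def leb_mat_def
        by (simp add: measurable_PiM_component_rev)
    next
      case False
      then have "(\<lambda>X. pad D L X i) = (\<lambda>X. 0)" unfolding i pad_def by auto
      then show ?thesis by simp
    qed
  qed auto
  then show ?thesis by simp
qed

lemma sample_space_simps: "space sample_space = UNIV"
  by (simp add: sample_space_def space_pair_measure space_PiM)

lemma target_meas[measurable]: "target D v \<in> borel_measurable sample_space"
proof -
  have "(\<lambda>\<omega>. (\<lambda>e \<omega>. (\<Sum>d=1..D. snd (snd \<omega>) (e, d) * v d) / sqrt (real D)) (fst (snd \<omega>)) \<omega>) \<in> borel_measurable sample_space"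
    unfolding sample_space_def
    by (rule measurable_compose_countable[where f="\<lambda>e \<omega>. (\<Sum>d=1..D. snd (snd \<omega>) (e, d) * v d) / sqrt (real D)"]) measurable
  then show ?thesis unfolding target_def by (simp add: case_prod_beta)
qed

lemma softmax_meas_S[measurable]: "(\<lambda>\<omega>. softmax_pred D (fst \<omega>) k v (snd (snd \<omega>))) \<in> borel_measurable sample_space"
  unfolding sample_space_def
  by (rule measurable_compose_countable[where f="\<lambda>L \<omega>. softmax_pred D L k v (snd (snd \<omega>))"]) measurable

lemma softmax_meas_O[measurable]: "(\<lambda>\<omega>. softmax_pred D (fst \<omega>) k v (snd \<omega>)) \<in> borel_measurable
   (count_space UNIV \<Otimes>\<^sub>M PiM UNIV (\<lambda>_. (borel :: real measure)))"
  by (rule measurable_compose_countable[where f="\<lambda>L \<omega>. softmax_pred D L k v (snd \<omega>)"]) measurable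

locale setting =
  fixes D Lbar :: nat and PL :: "nat pmf"
    and g :: "nat \<Rightarrow> nat \<Rightarrow> (nat \<Rightarrow> real) \<Rightarrow> real"
    and c :: real and kstar :: "nat \<Rightarrow> real"
  assumes D: "D \<ge> 1" and Lbar: "Lbar \<ge> 1"
    and PL: "set_pmf PL \<subseteq> {1..Lbar}"
    and g_meas: "\<And>L e. L \<ge> 1 \<Longrightarrow> e \<in> {1..L} \<Longrightarrow>
        g L e \<in> borel_measurable (PiM {1..L} (\<lambda>_. (borel :: real measure)))"
    and g_nonneg: "\<And>L e ch. L \<ge> 1 \<Longrightarrow> e \<in> {1..L} \<Longrightarrow>
        ch \<in> PiE {1..L} (\<lambda>_. UNIV) \<Longrightarrow> g L e ch \<ge> 0"
    and g_density: "\<And>k L e. L \<ge> 1 \<Longrightarrow> e \<in> {1..L} \<Longrightarrow>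
        (\<integral>\<^sup>+ X. ennreal (g L e (proj D L X k) * gauss_dens D L X) \<partial>leb_mat D L) = 1"
    and c: "c \<ge> 0"
    and g_ratio: "\<And>L e e' ch. L \<ge> 1 \<Longrightarrow> e \<in> {1..L} \<Longrightarrow> e' \<in> {1..L} \<Longrightarrow>
        ch \<in> PiE {1..L} (\<lambda>_. UNIV) \<Longrightarrow>
        g L e ch / g L e' ch = exp (c * (ch e - ch e'))"
begin

definition dens where "dens L e X = g L e (proj D L X kstar) * gauss_dens D L X"
definition nu where "nu L e = density (leb_mat D L) (\<lambda>X. ennreal (dens L e X))"
definition K where "K L e = distr (nu L e) sample_space (\<lambda>X. (L, e, pad D L X))"

lemma proj_in: "proj D L X w \<in> PiE {1..L} (\<lambda>_. UNIV)"
  by (simp add: proj_def)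

lemma g_pos: "L \<ge> 1 \<Longrightarrow> e \<in> {1..L} \<Longrightarrow> ch \<in> PiE {1..L} (\<lambda>_. UNIV) \<Longrightarrow> g L e ch > 0"
  using g_ratio[of L e e ch] g_nonneg[of L e ch] by (cases "g L e ch = 0") auto

lemma gauss_pos: "gauss_dens D L X > 0"
  unfolding gauss_dens_def std_normal_density_def by (intro prod_pos) auto

lemma dens_nonneg: "L \<ge> 1 \<Longrightarrow> e \<in> {1..L} \<Longrightarrow> dens L e X \<ge> 0"
  unfolding dens_def using g_pos[OF _ _ proj_in] gauss_pos
  by (simp add: less_imp_le)

lemma dens_meas[measurable]: "L \<ge> 1 \<Longrightarrow> e \<in> {1..L} \<Longrightarrow> dens L e \<in> borel_measurable (leb_mat D L)"
  unfolding dens_def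
  by (intro borel_measurable_times gauss_meas measurable_compose[OF proj_meas_leb g_meas])

lemma nu_prob: assumes "L \<ge> 1" "e \<in> {1..L}" shows "prob_space (nu L e)"
proof -
  have m: "(\<lambda>X. ennreal (dens L e X)) \<in> borel_measurable (leb_mat D L)"
    using dens_meas[OF assms] by measurable
  show ?thesis
  unfolding nu_def
  apply (rule prob_spaceI)
  apply (subst emeasure_density[OF m])
  using g_density[of L e kstar] assms by (auto simp: dens_def)
qed

lemma sets_K[simp]: "sets (K L e) = sets sample_space"
  by (simp add: K_def)

lemma K_meas: "(\<lambda>X. (L, e, pad D L X)) \<in> measurable (leb_mat D L) sample_space"
  unfolding sample_space_def by measurable

lemma K_prob: "L \<ge> 1 \<Longrightarrow> e \<in> {1..L} \<Longrightarrow> K L e \<in> space (prob_algebra sample_space)"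
  unfolding K_def space_prob_algebra
  using prob_space.prob_space_distr[OF nu_prob, of L e "(\<lambda>X. (L, e, pad D L X))" sample_space] K_meas
  by (auto simp: nu_def)

definition Kin where "Kin L = bind (measure_pmf (pmf_of_set {1..L})) (K L)"
definition Kin2 where "Kin2 L = bind (measure_pmf (pmf_of_set {1..L})) (\<lambda>e. K L (if e \<in> {1..L} then e else 1))"

definition L0 where "L0 = (SOME L. L \<in> set_pmf PL)"
lemma L0: "L0 \<in> set_pmf PL"
  unfolding L0_def using set_pmf_not_empty[of PL] by (metis all_not_in_conv someI_ex)

definition Kc where "Kc L = Kin2 (if L \<in> set_pmf PL then L else L0)"

lemma PL1: "L \<in> set_pmf PL \<Longrightarrow> L \<ge> 1" using PL by auto
lemma PLfin: "finite (set_pmf PL)" using PL by (rule finite_subset) simp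

lemma sets_Kin[simp]: "sets (Kin L) = sets sample_space"
  unfolding Kin_def by (rule sets_bind) auto
lemma sets_Kin2[simp]: "sets (Kin2 L) = sets sample_space"
  unfolding Kin2_def by (rule sets_bind) auto

lemma Kin2_kernel: "L \<ge> 1 \<Longrightarrow> (\<lambda>e. K L (if e \<in> {1..L} then e else 1)) \<in> measurable (measure_pmf (pmf_of_set {1..L})) (prob_algebra sample_space)"
  using K_prob by auto

lemma Kin2_prob: "L \<ge> 1 \<Longrightarrow> Kin2 L \<in> space (prob_algebra sample_space)"
  unfolding space_prob_algebra mem_Collect_eq
  apply (intro conjI sets_Kin2)
  unfolding Kin2_def
  apply (rule prob_space_bind'[OF _ Kin2_kernel])
  by (auto simp: space_prob_algebra prob_space_measure_pmf)

lemma Kc_kernel: "Kc \<in> measurable (measure_pmf PL) (prob_algebra sample_space)"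
  using Kin2_prob PL1 L0 by (auto simp: Kc_def)

lemma M_eq: "joint_law PL g D kstar = bind (measure_pmf PL) Kc"
proof -
  have "joint_law PL g D kstar = bind (measure_pmf PL) Kin"
    unfolding joint_law_def Kin_def K_def nu_def dens_def ..
  also have "\<dots> = bind (measure_pmf PL) Kc"
  proof (rule bind_measure_pmf_cong_support)
    fix L assume L: "L \<in> set_pmf PL"
    then have "Kc L = Kin2 L" by (simp add: Kc_def)
    also have "Kin2 L = Kin L"
      unfolding Kin2_def Kin_def
      by (rule bind_measure_pmf_cong_support) (use PL1[OF L] in auto)
    finally show "Kin L = Kc L" ..
  qed (simp add: Kc_def)
  finally show ?thesis .
qed

lemma M_prob: "prob_space (joint_law PL g D kstar)"
  unfolding M_eq by (rule prob_space_bind'[OF _ Kc_kernel]) (auto simp: space_prob_algebra prob_space_measure_pmf)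

lemma sets_M[simp]: "sets (joint_law PL g D kstar) = sets sample_space"
  unfolding M_eq by (rule sets_bind) (auto simp: Kc_def)

lemma space_M[simp]: "space (joint_law PL g D kstar) = UNIV"
  using sets_eq_imp_space_eq[OF sets_M] by (simp add: sample_space_simps)

lemma nn_K: "L \<ge> 1 \<Longrightarrow> e \<in> {1..L} \<Longrightarrow> \<phi> \<in> borel_measurable sample_space \<Longrightarrow>
  (\<integral>\<^sup>+\<omega>. \<phi> \<omega> \<partial>K L e) = (\<integral>\<^sup>+X. ennreal (dens L e X) * \<phi> (L, e, pad D L X) \<partial>leb_mat D L)"
  unfolding K_def nu_def
  apply (subst nn_integral_distr)
    apply (simp_all add: K_meas)
  apply (rule nn_integral_density)
   apply (simp add: dens_meas)
  using measurable_compose[OF K_meas] by blast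

lemma nn_Kin2: "L \<ge> 1 \<Longrightarrow> \<phi> \<in> borel_measurable sample_space \<Longrightarrow>
  (\<integral>\<^sup>+\<omega>. \<phi> \<omega> \<partial>Kin2 L) = (\<Sum>e\<in>{1..L}. (\<integral>\<^sup>+X. ennreal (dens L e X) * \<phi> (L, e, pad D L X) \<partial>leb_mat D L) * ennreal (1 / real L))"
  unfolding Kin2_def
  apply (subst nn_integral_bind[where B=sample_space])
    apply assumption
   apply (rule measurable_prob_algebraD[OF Kin2_kernel], assumption)
  apply (subst nn_integral_measure_pmf_finite)
    apply simp_all
  apply (intro sum.cong refl)
  apply (subst nn_K)
  by auto

lemma nn_M: "\<phi> \<in> borel_measurable sample_space \<Longrightarrow>
  (\<integral>\<^sup>+\<omega>. \<phi> \<omega> \<partial>joint_law PL g D kstar) = (\<Sum>L\<in>set_pmf PL.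
     (\<Sum>e\<in>{1..L}. (\<integral>\<^sup>+X. ennreal (dens L e X) * \<phi> (L, e, pad D L X) \<partial>leb_mat D L) * ennreal (1 / real L)) * ennreal (pmf PL L))"
  unfolding M_eq
  apply (subst nn_integral_bind[where B=sample_space])
    apply assumption
   apply (rule measurable_prob_algebraD[OF Kc_kernel])
  apply (subst nn_integral_measure_pmf_finite)
    apply (simp_all add: PLfin)
  apply (intro sum.cong refl)
  apply (simp add: Kc_def)
  apply (subst nn_Kin2)
  using PL1 by fastforce+

end

context setting begin

abbreviation "JL \<equiv> joint_law PL g D kstar"

lemma ennreal_mult_lt_top_D: "(a::ennreal) * ennreal p < top \<Longrightarrow> p > 0 \<Longrightarrow> a < top"
  by (cases "a = 0") (auto simp: ennreal_mult_less_top)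

lemma meas_JL: "f \<in> measurable sample_space N \<Longrightarrow> f \<in> measurable JL N"
  using measurable_cong_sets[OF sets_M refl, of N] by simp

definition Eint where "Eint \<phi> = (\<Sum>L\<in>set_pmf PL.
   (\<Sum>e\<in>{1..L}. (\<integral>X. dens L e X * \<phi> (L, e, pad D L X) \<partial>leb_mat D L) * (1 / real L)) * pmf PL L)"

lemma inner_meas: assumes "L \<ge> 1" "e \<in> {1..L}" "\<phi> \<in> borel_measurable sample_space" shows
   "(\<lambda>X. dens L e X * \<phi> (L, e, pad D L X)) \<in> borel_measurable (leb_mat D L)"
  using measurable_compose[OF K_meas[of L e] assms(3)] dens_meas[OF assms(1,2)] by measurable

lemma inner_fin:
  assumes m: "\<phi> \<in> borel_measurable sample_space" and fin: "(\<integral>\<^sup>+\<omega>. ennreal \<bar>\<phi> \<omega>\<bar> \<partial>JL) < \<infinity>"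
    and L: "L \<in> set_pmf PL" and e: "e \<in> {1..L}"
  shows "integrable (leb_mat D L) (\<lambda>X. dens L e X * \<phi> (L, e, pad D L X))"
proof -
  have L1: "L \<ge> 1" using PL1[OF L] .
  let ?T = "\<lambda>L e. (\<integral>\<^sup>+X. ennreal (dens L e X) * ennreal \<bar>\<phi> (L, e, pad D L X)\<bar> \<partial>leb_mat D L)"
  have "(\<Sum>L\<in>set_pmf PL. (\<Sum>e\<in>{1..L}. ?T L e * ennreal (1 / real L)) * ennreal (pmf PL L)) < \<infinity>"
    using fin nn_M[of "\<lambda>\<omega>. ennreal \<bar>\<phi> \<omega>\<bar>"] m by simp
  then have "(\<Sum>e\<in>{1..L}. ?T L e * ennreal (1 / real L)) * ennreal (pmf PL L) < \<infinity>"
    using L PLfin by (simp add: less_top)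
  then have s1: "(\<Sum>e\<in>{1..L}. ?T L e * ennreal (1 / real L)) * ennreal (pmf PL L) < top"
    unfolding infinity_ennreal_def .
  have pp: "pmf PL L > 0" using L by (simp add: pmf_positive)
  have s2: "(\<Sum>e\<in>{1..L}. ?T L e * ennreal (1 / real L)) < top"
    using s1 pp by (rule ennreal_mult_lt_top_D)
  have s3: "?T L e * ennreal (1 / real L) < top"
    using e s2 ennreal_sum_less_top[where I="{1..L}" and f="\<lambda>e. ?T L e * ennreal (1 / real L)"]
    by (simp only: finite_atLeastAtMost simp_thms)
  have "1 / real L > 0" using L1 by simp
  with s3 have "?T L e < top" by (rule ennreal_mult_lt_top_D)
  then have "?T L e < \<infinity>" unfolding infinity_ennreal_def .
  moreover have "?T L e = (\<integral>\<^sup>+X. ennreal (norm (dens L e X * \<phi> (L, e, pad D L X))) \<partial>leb_mat D L)"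
    using dens_nonneg[OF L1 e] by (intro nn_integral_cong) (simp add: abs_mult ennreal_mult)
  ultimately show ?thesis
    by (intro integrableI_bounded inner_meas[OF L1 e m]) simp
qed

lemma int_M_nonneg:
  assumes m: "\<phi> \<in> borel_measurable sample_space" and fin: "(\<integral>\<^sup>+\<omega>. ennreal \<bar>\<phi> \<omega>\<bar> \<partial>JL) < \<infinity>"
    and nn: "\<And>\<omega>. \<phi> \<omega> \<ge> 0"
  shows "integrable JL \<phi> \<and> integral\<^sup>L JL \<phi> = Eint \<phi>"
proof -
  have J: "(\<integral>\<^sup>+X. ennreal (dens L e X) * ennreal (\<phi> (L, e, pad D L X)) \<partial>leb_mat D L)
        = ennreal (\<integral>X. dens L e X * \<phi> (L, e, pad D L X) \<partial>leb_mat D L)"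
    if L: "L \<in> set_pmf PL" and e: "e \<in> {1..L}" for L e
  proof -
    have L1: "L \<ge> 1" using PL1[OF L] .
    have "(\<integral>\<^sup>+X. ennreal (dens L e X) * ennreal (\<phi> (L, e, pad D L X)) \<partial>leb_mat D L)
        = (\<integral>\<^sup>+X. ennreal (dens L e X * \<phi> (L, e, pad D L X)) \<partial>leb_mat D L)"
      using dens_nonneg[OF L1 e] by (intro nn_integral_cong) (simp add: ennreal_mult')
    also have "\<dots> = ennreal (\<integral>X. dens L e X * \<phi> (L, e, pad D L X) \<partial>leb_mat D L)"
      by (rule nn_integral_eq_integral[OF inner_fin[OF m fin L e]])
         (use dens_nonneg[OF L1 e] nn in simp)
    finally show ?thesis .
  qed
  have Jnn: "(\<integral>X. dens L e X * \<phi> (L, e, pad D L X) \<partial>leb_mat D L) \<ge> 0"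
    if L: "L \<in> set_pmf PL" and e: "e \<in> {1..L}" for L e
    using dens_nonneg[OF PL1[OF L] e] nn by (intro integral_nonneg_AE) simp
  have "(\<integral>\<^sup>+\<omega>. ennreal (\<phi> \<omega>) \<partial>JL) = (\<Sum>L\<in>set_pmf PL.
     (\<Sum>e\<in>{1..L}. ennreal (\<integral>X. dens L e X * \<phi> (L, e, pad D L X) \<partial>leb_mat D L) * ennreal (1 / real L)) * ennreal (pmf PL L))"
    using nn_M[of "\<lambda>\<omega>. ennreal (\<phi> \<omega>)"] m J by simp
  also have "\<dots> = ennreal (Eint \<phi>)"
  proof -
    let ?J = "\<lambda>L e. (\<integral>X. dens L e X * \<phi> (L, e, pad D L X) \<partial>leb_mat D L)"
    have i: "(\<Sum>e\<in>{1..L}. ennreal (?J L e) * ennreal (1 / real L)) = ennreal (\<Sum>e\<in>{1..L}. ?J L e * (1 / real L))"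
      if L: "L \<in> set_pmf PL" for L
    proof -
      have "(\<Sum>e\<in>{1..L}. ennreal (?J L e) * ennreal (1 / real L)) = (\<Sum>e\<in>{1..L}. ennreal (?J L e * (1 / real L)))"
      proof (intro sum.cong refl)
        fix e assume "e \<in> {1..L}"
        show "ennreal (?J L e) * ennreal (1 / real L) = ennreal (?J L e * (1 / real L))"
          by (simp only: ennreal_mult'[OF Jnn[OF L \<open>e \<in> {1..L}\<close>]])
      qed
      also have "\<dots> = ennreal (\<Sum>e\<in>{1..L}. ?J L e * (1 / real L))"
        by (rule sum_ennreal) (simp add: Jnn[OF L])
      finally show ?thesis .
    qed
    have inn: "(\<Sum>e\<in>{1..L}. ?J L e * (1 / real L)) \<ge> 0" if L: "L \<in> set_pmf PL" for L
      by (intro sum_nonneg) (simp add: Jnn[OF L])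
    have "(\<Sum>L\<in>set_pmf PL. (\<Sum>e\<in>{1..L}. ennreal (?J L e) * ennreal (1 / real L)) * ennreal (pmf PL L))
       = (\<Sum>L\<in>set_pmf PL. ennreal ((\<Sum>e\<in>{1..L}. ?J L e * (1 / real L)) * pmf PL L))"
    proof (intro sum.cong refl)
      fix L assume L: "L \<in> set_pmf PL"
      show "(\<Sum>e\<in>{1..L}. ennreal (?J L e) * ennreal (1 / real L)) * ennreal (pmf PL L) =
          ennreal ((\<Sum>e\<in>{1..L}. ?J L e * (1 / real L)) * pmf PL L)"
        by (simp only: i[OF L] ennreal_mult'[OF inn[OF L]])
    qed
    also have "\<dots> = ennreal (Eint \<phi>)"
      unfolding Eint_def by (rule sum_ennreal) (use inn in simp)
    finally show ?thesis .
  qed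
  finally have "(\<integral>\<^sup>+\<omega>. ennreal (\<phi> \<omega>) \<partial>JL) = ennreal (Eint \<phi>)" .
  moreover have "Eint \<phi> \<ge> 0" unfolding Eint_def by (intro sum_nonneg mult_nonneg_nonneg) (auto simp: Jnn)
  ultimately show ?thesis
    using nn_integral_eq_integrable[OF meas_JL[OF m], of "Eint \<phi>"] nn by simp
qed

lemma int_M:
  assumes m: "\<phi> \<in> borel_measurable sample_space" and fin: "(\<integral>\<^sup>+\<omega>. ennreal \<bar>\<phi> \<omega>\<bar> \<partial>JL) < \<infinity>"
  shows "integrable JL \<phi>" "integral\<^sup>L JL \<phi> = Eint \<phi>"
    "\<And>L e. L \<in> set_pmf PL \<Longrightarrow> e \<in> {1..L} \<Longrightarrow> integrable (leb_mat D L) (\<lambda>X. dens L e X * \<phi> (L, e, pad D L X))"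
proof -
  define p where "p \<omega> = max (\<phi> \<omega>) 0" for \<omega>
  define n where "n \<omega> = max (- \<phi> \<omega>) 0" for \<omega>
  have pm: "p \<in> borel_measurable sample_space" "n \<in> borel_measurable sample_space"
    unfolding p_def n_def using m by measurable
  have pfin: "(\<integral>\<^sup>+\<omega>. ennreal \<bar>p \<omega>\<bar> \<partial>JL) < \<infinity>"
    by (rule le_less_trans[OF _ fin], rule nn_integral_mono) (simp add: p_def)
  have nfin: "(\<integral>\<^sup>+\<omega>. ennreal \<bar>n \<omega>\<bar> \<partial>JL) < \<infinity>"
    by (rule le_less_trans[OF _ fin], rule nn_integral_mono) (simp add: n_def)
  have P: "integrable JL p \<and> integral\<^sup>L JL p = Eint p"
    by (rule int_M_nonneg[OF pm(1) pfin]) (simp add: p_def)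
  have N: "integrable JL n \<and> integral\<^sup>L JL n = Eint n"
    by (rule int_M_nonneg[OF pm(2) nfin]) (simp add: n_def)
  have phi: "\<phi> = (\<lambda>\<omega>. p \<omega> - n \<omega>)" by (auto simp: p_def n_def fun_eq_iff)
  show i: "integrable JL \<phi>" by (subst phi) (use P N in simp)
  show "\<And>L e. L \<in> set_pmf PL \<Longrightarrow> e \<in> {1..L} \<Longrightarrow> integrable (leb_mat D L) (\<lambda>X. dens L e X * \<phi> (L, e, pad D L X))"
    by (rule inner_fin[OF m fin])
  have ip: "integrable (leb_mat D L) (\<lambda>X. dens L e X * p (L, e, pad D L X))"
    and inn: "integrable (leb_mat D L) (\<lambda>X. dens L e X * n (L, e, pad D L X))"
    if "L \<in> set_pmf PL" "e \<in> {1..L}" for L e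
    using inner_fin[OF pm(1) pfin that] inner_fin[OF pm(2) nfin that] by auto
  have "integral\<^sup>L JL \<phi> = integral\<^sup>L JL p - integral\<^sup>L JL n"
    by (subst phi) (use P N in simp)
  also have "\<dots> = Eint p - Eint n" using P N by simp
  also have "\<dots> = Eint \<phi>"
    unfolding Eint_def
    apply (simp only: sum_subtractf[symmetric] left_diff_distrib[symmetric])
    apply (intro sum.cong refl arg_cong2[where f="(*)"])
  proof -
    fix L e assume Le: "L \<in> set_pmf PL" "e \<in> {1..L}"
    have "(\<integral>X. dens L e X * \<phi> (L, e, pad D L X) \<partial>leb_mat D L) =
      (\<integral>X. dens L e X * p (L, e, pad D L X) - dens L e X * n (L, e, pad D L X) \<partial>leb_mat D L)"
      by (subst phi) (simp add: right_diff_distrib)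
    also have "\<dots> = (\<integral>X. dens L e X * p (L, e, pad D L X) \<partial>leb_mat D L) - (\<integral>X. dens L e X * n (L, e, pad D L X) \<partial>leb_mat D L)"
      by (rule Bochner_Integration.integral_diff[OF ip[OF Le] inn[OF Le]])
    finally show "(\<integral>X. dens L e X * p (L, e, pad D L X) \<partial>leb_mat D L) - (\<integral>X. dens L e X * n (L, e, pad D L X) \<partial>leb_mat D L)
      = (\<integral>X. dens L e X * \<phi> (L, e, pad D L X) \<partial>leb_mat D L)" by simp
  qed
  finally show "integral\<^sup>L JL \<phi> = Eint \<phi>" .
qed

end

definition Qs :: "nat \<Rightarrow> nat \<Rightarrow> (nat \<times> nat \<Rightarrow> real) \<Rightarrow> real" where
  "Qs D L X = (\<Sum>p\<in>{1..L}\<times>{1..D}. (X p)\<^sup>2)"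

lemma Qs_nonneg: "Qs D L X \<ge> 0" unfolding Qs_def by (intro sum_nonneg) auto

lemma Qs_meas[measurable]: "Qs D L \<in> borel_measurable (leb_mat D L)"
  unfolding Qs_def leb_mat_def
  by (intro borel_measurable_sum) (auto intro!: borel_measurable_power measurable_PiM_component_rev)

lemma gauss_prod: "gauss_dens D L X = (\<Prod>p\<in>{1..L}\<times>{1..D}. std_normal_density (X p))"
  unfolding gauss_dens_def by (simp add: prod.cartesian_product)

lemma gauss_bound: "gauss_dens D L X * Qs D L X \<le> (8/3) * gauss_dens D L (\<lambda>p. (1/2) * X p)"
proof -
  let ?I = "{1..L}\<times>{1..D}"
  have pt: "std_normal_density x = std_normal_density ((1/2) * x) * exp (- 3 * x\<^sup>2 / 8)" for x :: real
    unfolding std_normal_density_def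
    by (simp add: mult.assoc exp_add[symmetric] power2_eq_square field_simps)
  have "gauss_dens D L X = gauss_dens D L (\<lambda>p. (1/2) * X p) * (\<Prod>p\<in>?I. exp (- 3 * (X p)\<^sup>2 / 8))"
    unfolding gauss_prod by (subst pt) (simp add: prod.distrib)
  also have "(\<Prod>p\<in>?I. exp (- 3 * (X p)\<^sup>2 / 8)) = exp (- 3 * Qs D L X / 8)"
    unfolding Qs_def by (simp add: exp_sum[symmetric] sum_divide_distrib sum_distrib_left)
  finally have eq: "gauss_dens D L X = gauss_dens D L (\<lambda>p. (1/2) * X p) * exp (- 3 * Qs D L X / 8)" .
  have key: "Qs D L X * exp (- 3 * Qs D L X / 8) \<le> 8/3"
  proof -
    let ?q = "Qs D L X"
    have "1 + 3 * ?q / 8 \<le> exp (3 * ?q / 8)" by (rule exp_ge_add_one_self)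
    then have "?q \<le> 8/3 * exp (3 * ?q / 8)" by linarith
    then have "?q * exp (- 3 * ?q / 8) \<le> 8/3 * exp (3 * ?q / 8) * exp (- 3 * ?q / 8)"
      by (intro mult_right_mono) auto
    also have "\<dots> = 8/3" by (simp add: mult.assoc exp_add[symmetric])
    finally show ?thesis .
  qed
  have gp: "gauss_dens D L (\<lambda>p. (1/2) * X p) \<ge> 0"
    unfolding gauss_dens_def by (intro prod_nonneg) simp
  have "gauss_dens D L X * Qs D L X = gauss_dens D L (\<lambda>p. (1/2) * X p) * (Qs D L X * exp (- 3 * Qs D L X / 8))"
    by (subst eq) (simp add: mult_ac)
  also have "\<dots> \<le> gauss_dens D L (\<lambda>p. (1/2) * X p) * (8/3)"
    by (intro mult_left_mono key gp)
  finally show ?thesis by (simp add: mult_ac)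
qed

context setting begin

lemma core:
  assumes L1: "L \<ge> 1" and e: "e \<in> {1..L}"
  shows "(\<integral>\<^sup>+X. ennreal (dens L e X) * ennreal (Qs D L X) \<partial>leb_mat D L) < \<infinity>"
proof -
  let ?I = "{1..L}\<times>{1..D}"
  define f where "f X = ennreal (g L e (proj D L X (\<lambda>d. 2 * kstar d)) * gauss_dens D L X)" for X
  have fm: "f \<in> borel_measurable (PiM ?I (\<lambda>_. lborel))"
    unfolding f_def leb_mat_def[symmetric]
    using measurable_compose[OF proj_meas_leb g_meas[OF L1 e]] gauss_meas by measurable
  have f1: "(\<integral>\<^sup>+X. f X \<partial>PiM ?I (\<lambda>_. lborel)) = 1"
    unfolding f_def leb_mat_def[symmetric] by (rule g_density[OF L1 e])
  have sc: "(\<integral>\<^sup>+Y. f (\<lambda>p\<in>?I. (1/2) * Y p) \<partial>PiM ?I (\<lambda>_. lborel)) = ennreal ((1/(1/2)) ^ card ?I)"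
    using nn_integral_PiM_scale[of "1/2" ?I f] fm f1 by simp
  have fr: "f (\<lambda>p\<in>?I. (1/2) * Y p) = ennreal (g L e (proj D L Y kstar) * gauss_dens D L (\<lambda>p. (1/2) * Y p))" for Y
  proof -
    have "proj D L (\<lambda>p\<in>?I. (1/2) * Y p) (\<lambda>d. 2 * kstar d) = proj D L Y kstar"
      unfolding proj_def by (intro restrict_ext arg_cong2[where f="(/)"] sum.cong) auto
    moreover have "gauss_dens D L (\<lambda>p\<in>?I. (1/2) * Y p) = gauss_dens D L (\<lambda>p. (1/2) * Y p)"
      unfolding gauss_dens_def by (intro prod.cong) auto
    ultimately show ?thesis unfolding f_def by simp
  qed
  have "(\<integral>\<^sup>+X. ennreal (dens L e X) * ennreal (Qs D L X) \<partial>leb_mat D L)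
      \<le> (\<integral>\<^sup>+Y. ennreal (8/3) * f (\<lambda>p\<in>?I. (1/2) * Y p) \<partial>leb_mat D L)"
  proof (rule nn_integral_mono)
    fix Y
    have gn: "g L e (proj D L Y kstar) \<ge> 0" using g_nonneg[OF L1 e proj_in] .
    have "dens L e Y * Qs D L Y = g L e (proj D L Y kstar) * (gauss_dens D L Y * Qs D L Y)"
      by (simp add: dens_def mult_ac)
    also have "\<dots> \<le> g L e (proj D L Y kstar) * ((8/3) * gauss_dens D L (\<lambda>p. (1/2) * Y p))"
      by (intro mult_left_mono gauss_bound gn)
    finally have "dens L e Y * Qs D L Y \<le> 8/3 * (g L e (proj D L Y kstar) * gauss_dens D L (\<lambda>p. (1/2) * Y p))"
      by (simp add: mult_ac)
    then show "ennreal (dens L e Y) * ennreal (Qs D L Y) \<le> ennreal (8/3) * f (\<lambda>p\<in>?I. (1/2) * Y p)"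
      unfolding fr using dens_nonneg[OF L1 e, of Y]
      by (simp add: ennreal_mult'[symmetric] ennreal_leI)
  qed
  also have "\<dots> = ennreal (8/3) * (\<integral>\<^sup>+Y. f (\<lambda>p\<in>?I. (1/2) * Y p) \<partial>leb_mat D L)"
    apply (rule nn_integral_cmult)
    unfolding leb_mat_def
    apply (rule measurable_compose[OF _ fm])
    by (rule measurable_restrict) auto
  also have "\<dots> < \<infinity>" using sc unfolding leb_mat_def by (simp add: ennreal_mult_less_top)
  finally show ?thesis .
qed

end

definition Wv :: "nat \<Rightarrow> (nat \<Rightarrow> real) \<Rightarrow> real" where
  "Wv D w = (\<Sum>d=1..D. (w d)\<^sup>2) / real D"

lemma Wv_nonneg: "Wv D w \<ge> 0" unfolding Wv_def by (intro divide_nonneg_nonneg sum_nonneg) auto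

lemma projv_sq:
  assumes D: "D \<ge> 1" and l: "l \<in> {1..L}"
  shows "(projv D X w l)\<^sup>2 \<le> Wv D w * Qs D L X"
proof -
  have "(projv D X w l)\<^sup>2 = (\<Sum>d=1..D. X (l, d) * w d)\<^sup>2 / real D"
    unfolding projv_def using D by (simp add: power_divide)
  also have "\<dots> \<le> ((\<Sum>d=1..D. (X (l, d))\<^sup>2) * (\<Sum>d=1..D. (w d)\<^sup>2)) / real D"
    by (intro divide_right_mono Cauchy_Schwarz_ineq_sum) auto
  also have "(\<Sum>d=1..D. (X (l, d))\<^sup>2) \<le> Qs D L X"
  proof -
    have "(\<Sum>d=1..D. (X (l, d))\<^sup>2) = (\<Sum>p\<in>{l}\<times>{1..D}. (X p)\<^sup>2)"
      by (rule sum.reindex_bij_witness[where i="\<lambda>p. snd p" and j="\<lambda>d. (l, d)"]) auto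
    also have "\<dots> \<le> Qs D L X" unfolding Qs_def
      by (intro sum_mono2) (use l in auto)
    finally show ?thesis .
  qed
  then have "((\<Sum>d=1..D. (X (l, d))\<^sup>2) * (\<Sum>d=1..D. (w d)\<^sup>2)) / real D \<le> (Qs D L X * (\<Sum>d=1..D. (w d)\<^sup>2)) / real D"
    by (intro divide_right_mono mult_right_mono) (auto intro: sum_nonneg)
  finally show ?thesis by (simp add: Wv_def mult_ac)
qed

lemma softmax_sq:
  assumes D: "D \<ge> 1"
  shows "(softmax_pred D L k v X)\<^sup>2 \<le> (real L)\<^sup>2 * Wv D v * Qs D L X"
proof -
  let ?B = "sqrt (Wv D v * Qs D L X)"
  have zb: "\<bar>projv D X v l\<bar> \<le> ?B" if "l \<in> {1..L}" for l
    using projv_sq[OF D that, of X v] by (metis real_sqrt_abs real_sqrt_le_mono)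
  let ?S = "\<Sum>l'=1..L. exp (projv D X k l')"
  have sb: "\<bar>exp (projv D X k l) / ?S\<bar> \<le> 1" if "l \<in> {1..L}" for l
  proof -
    have le: "exp (projv D X k l) \<le> ?S" by (rule member_le_sum) (use that in auto)
    have S: "?S > 0" by (rule sum_pos) (use that in auto)
    have "exp (projv D X k l) / ?S \<le> 1" using le S by (simp add: pos_divide_le_eq)
    moreover have "exp (projv D X k l) / ?S \<ge> 0" using S by simp
    ultimately show ?thesis by simp
  qed
  have "\<bar>softmax_pred D L k v X\<bar> \<le> (\<Sum>l=1..L. \<bar>exp (projv D X k l) / ?S * projv D X v l\<bar>)"
    unfolding softmax_pred_eq by (rule sum_abs)
  also have "\<dots> \<le> (\<Sum>l=1..L. ?B)"
  proof (intro sum_mono)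
    fix l assume l: "l \<in> {1..L}"
    have "\<bar>exp (projv D X k l) / ?S * projv D X v l\<bar> = \<bar>exp (projv D X k l) / ?S\<bar> * \<bar>projv D X v l\<bar>"
      by (simp add: abs_mult)
    also have "\<dots> \<le> 1 * ?B" by (intro mult_mono sb zb l) auto
    finally show "\<bar>exp (projv D X k l) / ?S * projv D X v l\<bar> \<le> ?B" by simp
  qed
  also have "\<dots> = real L * ?B" by simp
  finally have a: "\<bar>softmax_pred D L k v X\<bar> \<le> real L * ?B" .
  have "(softmax_pred D L k v X)\<^sup>2 = \<bar>softmax_pred D L k v X\<bar>\<^sup>2" by simp
  also have "\<dots> \<le> (real L * ?B)\<^sup>2" by (intro power_mono a) simp
  also have "\<dots> = (real L)\<^sup>2 * Wv D v * Qs D L X"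
    using Wv_nonneg[of D v] Qs_nonneg[of D L X] by (simp add: power_mult_distrib)
  finally show ?thesis .
qed

lemma sq_diff_le: "((a::real) - b)\<^sup>2 \<le> 2 * a\<^sup>2 + 2 * b\<^sup>2"
proof -
  have "((a::real) - b)\<^sup>2 = 2 * a\<^sup>2 + 2 * b\<^sup>2 - (a + b)\<^sup>2" by (simp add: power2_eq_square algebra_simps)
  moreover have "(a + b)\<^sup>2 \<ge> 0" by simp
  ultimately show ?thesis by linarith
qed

lemma abs_prod_le: "\<bar>(a::real) * b\<bar> \<le> a\<^sup>2 + b\<^sup>2"
proof -
  have "(\<bar>a\<bar> - \<bar>b\<bar>)\<^sup>2 = a\<^sup>2 + b\<^sup>2 - 2 * (\<bar>a\<bar> * \<bar>b\<bar>)" by (simp add: power2_eq_square algebra_simps)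
  moreover have "(\<bar>a\<bar> - \<bar>b\<bar>)\<^sup>2 \<ge> 0" by simp
  ultimately have h: "2 * (\<bar>a\<bar> * \<bar>b\<bar>) \<le> a\<^sup>2 + b\<^sup>2" by linarith
  have "\<bar>a\<bar> * \<bar>b\<bar> \<ge> 0" by simp
  then show ?thesis unfolding abs_mult using h by linarith
qed

lemma abs_le_one_sq: "\<bar>a::real\<bar> \<le> 1 + a\<^sup>2"
proof (cases "\<bar>a\<bar> \<le> 1")
  case True then show ?thesis by (smt (verit) zero_le_power2)
next
  case False
  then have "\<bar>a\<bar> * 1 \<le> \<bar>a\<bar> * \<bar>a\<bar>" by (intro mult_left_mono) auto
  then show ?thesis by (simp add: power2_eq_square)
qed

context setting begin

lemma fin_bound:
  assumes m: "\<phi> \<in> borel_measurable sample_space" and C: "C \<ge> 0"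
    and b: "\<And>L e X. L \<in> set_pmf PL \<Longrightarrow> e \<in> {1..L} \<Longrightarrow> \<bar>\<phi> (L, e, pad D L X)\<bar> \<le> C * (1 + Qs D L X)"
  shows "(\<integral>\<^sup>+\<omega>. ennreal \<bar>\<phi> \<omega>\<bar> \<partial>JL) < \<infinity>"
proof -
  have inner: "(\<integral>\<^sup>+X. ennreal (dens L e X) * ennreal \<bar>\<phi> (L, e, pad D L X)\<bar> \<partial>leb_mat D L) < top"
    if L: "L \<in> set_pmf PL" and e: "e \<in> {1..L}" for L e
  proof -
    have L1: "L \<ge> 1" using PL1[OF L] .
    have dm: "(\<lambda>X. ennreal (dens L e X)) \<in> borel_measurable (leb_mat D L)"
      using dens_meas[OF L1 e] by measurable
    have qm: "(\<lambda>X. ennreal (dens L e X) * ennreal (Qs D L X)) \<in> borel_measurable (leb_mat D L)"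
      using dens_meas[OF L1 e] by measurable
    have "(\<integral>\<^sup>+X. ennreal (dens L e X) * ennreal \<bar>\<phi> (L, e, pad D L X)\<bar> \<partial>leb_mat D L)
        \<le> (\<integral>\<^sup>+X. ennreal C * (ennreal (dens L e X) + ennreal (dens L e X) * ennreal (Qs D L X)) \<partial>leb_mat D L)"
    proof (rule nn_integral_mono)
      fix X
      have "dens L e X * \<bar>\<phi> (L, e, pad D L X)\<bar> \<le> dens L e X * (C * (1 + Qs D L X))"
        by (intro mult_left_mono b L e dens_nonneg[OF L1 e])
      then show "ennreal (dens L e X) * ennreal \<bar>\<phi> (L, e, pad D L X)\<bar>
          \<le> ennreal C * (ennreal (dens L e X) + ennreal (dens L e X) * ennreal (Qs D L X))"
        using dens_nonneg[OF L1 e, of X] C Qs_nonneg[of D L X]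
        by (simp add: ennreal_mult'[symmetric] ennreal_plus[symmetric] ennreal_leI algebra_simps del: ennreal_plus)
    qed
    also have "\<dots> = ennreal C * ((\<integral>\<^sup>+X. ennreal (dens L e X) \<partial>leb_mat D L) + (\<integral>\<^sup>+X. ennreal (dens L e X) * ennreal (Qs D L X) \<partial>leb_mat D L))"
      using dm qm by (simp add: nn_integral_cmult nn_integral_add)
    also have "(\<integral>\<^sup>+X. ennreal (dens L e X) \<partial>leb_mat D L) = 1"
      unfolding dens_def by (rule g_density[OF L1 e])
    also have "ennreal C * (1 + (\<integral>\<^sup>+X. ennreal (dens L e X) * ennreal (Qs D L X) \<partial>leb_mat D L)) < top"
      using core[OF L1 e] by (simp add: ennreal_mult_less_top)
    finally show ?thesis .
  qed
  have "(\<integral>\<^sup>+\<omega>. ennreal \<bar>\<phi> \<omega>\<bar> \<partial>JL) = (\<Sum>L\<in>set_pmf PL.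
     (\<Sum>e\<in>{1..L}. (\<integral>\<^sup>+X. ennreal (dens L e X) * ennreal \<bar>\<phi> (L, e, pad D L X)\<bar> \<partial>leb_mat D L) * ennreal (1 / real L)) * ennreal (pmf PL L))"
    using nn_M[of "\<lambda>\<omega>. ennreal \<bar>\<phi> \<omega>\<bar>"] m by simp
  also have "\<dots> < top"
    using inner PLfin by (simp add: ennreal_mult_less_top)
  finally show ?thesis by simp
qed

definition sqb where "sqb u C \<longleftrightarrow> u \<in> borel_measurable sample_space \<and> C \<ge> 0 \<and>
   (\<forall>L\<in>set_pmf PL. \<forall>e\<in>{1..L}. \<forall>X. (u (L, e, pad D L X))\<^sup>2 \<le> C * Qs D L X)"

lemma sqb_target: "sqb (target D v) (Wv D v)"
  unfolding sqb_def using Wv_nonneg projv_sq[OF D] by (auto simp: target_pad)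

lemma sqb_softmax: "sqb (\<lambda>\<omega>. softmax_pred D (fst \<omega>) k v (snd (snd \<omega>))) ((real Lbar)\<^sup>2 * Wv D v)"
  unfolding sqb_def
proof (intro conjI ballI allI)
  fix L e X assume L: "L \<in> set_pmf PL" and e: "e \<in> {1..L}"
  have "L \<le> Lbar" using PL L by auto
  have "(softmax_pred D L k v X)\<^sup>2 \<le> (real L)\<^sup>2 * Wv D v * Qs D L X" by (rule softmax_sq[OF D])
  also have "\<dots> \<le> (real Lbar)\<^sup>2 * Wv D v * Qs D L X"
    using \<open>L \<le> Lbar\<close> Wv_nonneg[of D v] Qs_nonneg[of D L X]
    by (intro mult_right_mono power_mono) auto
  finally show "(softmax_pred D (fst (L, e, pad D L X)) k v (snd (snd (L, e, pad D L X))))\<^sup>2 \<le> (real Lbar)\<^sup>2 * Wv D v * Qs D L X"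
    by (simp add: softmax_pred_pad)
qed (use Wv_nonneg in auto)

lemma sqb_diff: "sqb u C \<Longrightarrow> sqb u' C' \<Longrightarrow> sqb (\<lambda>\<omega>. u \<omega> - u' \<omega>) (2 * (C + C'))"
  unfolding sqb_def
proof (elim conjE, intro conjI ballI allI)
  fix L e X assume b1: "\<forall>L\<in>set_pmf PL. \<forall>e\<in>{1..L}. \<forall>X. (u (L, e, pad D L X))\<^sup>2 \<le> C * Qs D L X"
    and b2: "\<forall>L\<in>set_pmf PL. \<forall>e\<in>{1..L}. \<forall>X. (u' (L, e, pad D L X))\<^sup>2 \<le> C' * Qs D L X"
    and L: "L \<in> set_pmf PL" and e: "e \<in> {1..L}"
  let ?a = "u (L, e, pad D L X)" and ?b = "u' (L, e, pad D L X)"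
  have "(?a - ?b)\<^sup>2 \<le> 2 * ?a\<^sup>2 + 2 * ?b\<^sup>2" by (rule sq_diff_le)
  also have "\<dots> \<le> 2 * (C * Qs D L X) + 2 * (C' * Qs D L X)" using b1 b2 L e by (meson add_mono mult_left_mono zero_le_numeral)
  finally show "(?a - ?b)\<^sup>2 \<le> 2 * (C + C') * Qs D L X" by (simp add: algebra_simps)
qed auto

lemma sqb_fin_sq: "sqb u C \<Longrightarrow> (\<integral>\<^sup>+\<omega>. ennreal \<bar>(u \<omega>)\<^sup>2\<bar> \<partial>JL) < \<infinity>"
  unfolding sqb_def
proof (elim conjE, intro fin_bound[where C=C])
  fix L e X assume b1: "\<forall>L\<in>set_pmf PL. \<forall>e\<in>{1..L}. \<forall>X. (u (L, e, pad D L X))\<^sup>2 \<le> C * Qs D L X"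
    and L: "L \<in> set_pmf PL" and e: "e \<in> {1..L}" and C: "C \<ge> 0"
  have "\<bar>(u (L, e, pad D L X))\<^sup>2\<bar> \<le> C * Qs D L X" using b1 L e by simp
  also have "\<dots> \<le> C * (1 + Qs D L X)" using C by (simp add: algebra_simps)
  finally show "\<bar>(u (L, e, pad D L X))\<^sup>2\<bar> \<le> C * (1 + Qs D L X)" .
qed auto

lemma sqb_fin_prod: "sqb u C \<Longrightarrow> sqb u' C' \<Longrightarrow> (\<integral>\<^sup>+\<omega>. ennreal \<bar>u \<omega> * u' \<omega>\<bar> \<partial>JL) < \<infinity>"
  unfolding sqb_def
proof (elim conjE, intro fin_bound[where C="C + C'"])
  fix L e X assume b1: "\<forall>L\<in>set_pmf PL. \<forall>e\<in>{1..L}. \<forall>X. (u (L, e, pad D L X))\<^sup>2 \<le> C * Qs D L X"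
    and b2: "\<forall>L\<in>set_pmf PL. \<forall>e\<in>{1..L}. \<forall>X. (u' (L, e, pad D L X))\<^sup>2 \<le> C' * Qs D L X"
    and L: "L \<in> set_pmf PL" and e: "e \<in> {1..L}" and C: "C \<ge> 0" "C' \<ge> 0"
  let ?a = "u (L, e, pad D L X)" and ?b = "u' (L, e, pad D L X)"
  have "\<bar>?a * ?b\<bar> \<le> ?a\<^sup>2 + ?b\<^sup>2" by (rule abs_prod_le)
  also have "\<dots> \<le> C * Qs D L X + C' * Qs D L X" using b1 b2 L e by (meson add_mono)
  also have "\<dots> \<le> (C + C') * (1 + Qs D L X)" using C by (simp add: algebra_simps)
  finally show "\<bar>?a * ?b\<bar> \<le> (C + C') * (1 + Qs D L X)" .
qed auto

lemma sqb_fin_lin: "sqb u C \<Longrightarrow> (\<integral>\<^sup>+\<omega>. ennreal \<bar>u \<omega>\<bar> \<partial>JL) < \<infinity>"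
  unfolding sqb_def
proof (elim conjE, intro fin_bound[where C="1 + C"])
  fix L e X assume b1: "\<forall>L\<in>set_pmf PL. \<forall>e\<in>{1..L}. \<forall>X. (u (L, e, pad D L X))\<^sup>2 \<le> C * Qs D L X"
    and L: "L \<in> set_pmf PL" and e: "e \<in> {1..L}" and C: "C \<ge> 0"
  let ?a = "u (L, e, pad D L X)"
  have "\<bar>?a\<bar> \<le> 1 + ?a\<^sup>2" by (rule abs_le_one_sq)
  also have "\<dots> \<le> 1 + C * Qs D L X" using b1 L e by simp
  also have "\<dots> \<le> (1 + C) * (1 + Qs D L X)" using C Qs_nonneg[of D L X] by (simp add: algebra_simps)
  finally show "\<bar>?a\<bar> \<le> (1 + C) * (1 + Qs D L X)" .
qed auto

end

lemma projv_cmult: "projv D X (\<lambda>d. c * k d) l = c * projv D X k l"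
  unfolding projv_def by (simp add: sum_distrib_left mult_ac)

context setting begin

lemma key_identity:
  assumes L1: "L \<ge> 1"
  shows "(\<Sum>e\<in>{1..L}. dens L e X * (projv D X v e - softmax_pred D L (\<lambda>d. c * kstar d) v X)) = 0"
proof -
  let ?ch = "proj D L X kstar"
  let ?s = "\<lambda>l. exp (c * projv D X kstar l)"
  let ?S = "\<Sum>l\<in>{1..L}. ?s l"
  let ?z = "\<lambda>l. projv D X v l"
  have one: "1 \<in> {1..L}" using L1 by simp
  have G1: "g L 1 ?ch > 0" by (rule g_pos[OF L1 one proj_in])
  define K where "K = g L 1 ?ch / ?s 1"
  have G: "g L e ?ch = K * ?s e" if e: "e \<in> {1..L}" for e
  proof -
    have "g L e ?ch / g L 1 ?ch = exp (c * (?ch e - ?ch 1))" by (rule g_ratio[OF L1 e one proj_in])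
    also have "\<dots> = ?s e / ?s 1" using e one
      by (simp add: proj_apply right_diff_distrib exp_diff)
    finally show ?thesis using G1 unfolding K_def by (simp add: field_simps)
  qed
  have S: "?S > 0" by (rule sum_pos) (use one in auto)
  have sm: "softmax_pred D L (\<lambda>d. c * kstar d) v X = (\<Sum>l\<in>{1..L}. ?s l * ?z l) / ?S"
    unfolding softmax_pred_eq projv_cmult by (simp add: sum_divide_distrib)
  have "(\<Sum>e\<in>{1..L}. dens L e X * (?z e - softmax_pred D L (\<lambda>d. c * kstar d) v X))
      = gauss_dens D L X * K * ((\<Sum>e\<in>{1..L}. ?s e * ?z e) - ?S * softmax_pred D L (\<lambda>d. c * kstar d) v X)"
  proof -
    have "(\<Sum>e\<in>{1..L}. dens L e X * (?z e - softmax_pred D L (\<lambda>d. c * kstar d) v X))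
      = (\<Sum>e\<in>{1..L}. gauss_dens D L X * K * (?s e * ?z e - ?s e * softmax_pred D L (\<lambda>d. c * kstar d) v X))"
    proof (intro sum.cong refl)
      fix e assume e: "e \<in> {1..L}"
      show "dens L e X * (?z e - softmax_pred D L (\<lambda>d. c * kstar d) v X)
         = gauss_dens D L X * K * (?s e * ?z e - ?s e * softmax_pred D L (\<lambda>d. c * kstar d) v X)"
        unfolding dens_def G[OF e] by (simp add: algebra_simps)
    qed
    then show ?thesis
      by (simp add: sum_subtractf sum_distrib_left[symmetric] sum_distrib_right[symmetric] mult.assoc)
  qed
  also have "?S * softmax_pred D L (\<lambda>d. c * kstar d) v X = (\<Sum>e\<in>{1..L}. ?s e * ?z e)"
    unfolding sm using S by simp
  finally show ?thesis by simp
qed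

lemma cross_zero:
  fixes h :: "nat \<times> (nat \<times> nat \<Rightarrow> real) \<Rightarrow> real" and v :: "nat \<Rightarrow> real"
  defines "\<phi> \<equiv> \<lambda>\<omega>. (target D v \<omega> - softmax_pred D (fst \<omega>) (\<lambda>d. c * kstar d) v (snd (snd \<omega>))) * h (fst \<omega>, snd (snd \<omega>))"
  assumes m: "\<phi> \<in> borel_measurable sample_space" and fin: "(\<integral>\<^sup>+\<omega>. ennreal \<bar>\<phi> \<omega>\<bar> \<partial>JL) < \<infinity>"
  shows "integrable JL \<phi>" "integral\<^sup>L JL \<phi> = 0"
proof -
  show "integrable JL \<phi>" by (rule int_M(1)[OF m fin])
  have "integral\<^sup>L JL \<phi> = Eint \<phi>" by (rule int_M(2)[OF m fin])
  also have "Eint \<phi> = 0"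
    unfolding Eint_def
  proof (intro sum.neutral ballI)
    fix L assume L: "L \<in> set_pmf PL"
    have L1: "L \<ge> 1" using PL1[OF L] .
    have ii: "\<And>e. e \<in> {1..L} \<Longrightarrow> integrable (leb_mat D L) (\<lambda>X. dens L e X * \<phi> (L, e, pad D L X))"
      by (rule int_M(3)[OF m fin L])
    have "(\<Sum>e\<in>{1..L}. (\<integral>X. dens L e X * \<phi> (L, e, pad D L X) \<partial>leb_mat D L))
       = (\<integral>X. (\<Sum>e\<in>{1..L}. dens L e X * \<phi> (L, e, pad D L X)) \<partial>leb_mat D L)"
      using Bochner_Integration.integral_sum[where I="{1..L}" and M="leb_mat D L" and f="\<lambda>e X. dens L e X * \<phi> (L, e, pad D L X)"] ii
      by simp
    also have "\<dots> = (\<integral>X. 0 \<partial>leb_mat D L)"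
    proof (rule Bochner_Integration.integral_cong[OF refl])
      fix X
      have "(\<Sum>e\<in>{1..L}. dens L e X * \<phi> (L, e, pad D L X))
          = (\<Sum>e\<in>{1..L}. dens L e X * (projv D X v e - softmax_pred D L (\<lambda>d. c * kstar d) v X)) * h (L, pad D L X)"
        unfolding sum_distrib_right \<phi>_def
        by (intro sum.cong refl) (simp add: target_pad softmax_pred_pad mult_ac)
      then show "(\<Sum>e\<in>{1..L}. dens L e X * \<phi> (L, e, pad D L X)) = 0"
        using key_identity[OF L1] by simp
    qed
    finally have "(\<Sum>e\<in>{1..L}. (\<integral>X. dens L e X * \<phi> (L, e, pad D L X) \<partial>leb_mat D L)) = 0" by simp
    then show "(\<Sum>e\<in>{1..L}. (\<integral>X. dens L e X * \<phi> (L, e, pad D L X) \<partial>leb_mat D L) * (1 / real L)) * pmf PL L = 0"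
      by (simp only: sum_distrib_right[symmetric])
  qed
  finally show "integral\<^sup>L JL \<phi> = 0" .
qed

end

context setting begin

lemma sqb_meas: "sqb u C \<Longrightarrow> u \<in> borel_measurable sample_space" unfolding sqb_def by simp

lemma sqb_int: assumes "sqb u C" shows "integrable JL u"
  by (rule int_M(1)[OF sqb_meas[OF assms] sqb_fin_lin[OF assms]])

lemma sqb_int_sq: assumes "sqb u C" shows "integrable JL (\<lambda>\<omega>. (u \<omega>)\<^sup>2)"
proof -
  have m: "(\<lambda>\<omega>. (u \<omega>)\<^sup>2) \<in> borel_measurable sample_space" using sqb_meas[OF assms] by measurable
  show ?thesis by (rule int_M(1)[OF m sqb_fin_sq[OF assms]])
qed

lemma sqb_int_prod: assumes "sqb u C" "sqb u' C'" shows "integrable JL (\<lambda>\<omega>. u \<omega> * u' \<omega>)"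
proof -
  have m: "(\<lambda>\<omega>. u \<omega> * u' \<omega>) \<in> borel_measurable sample_space" using sqb_meas[OF assms(1)] sqb_meas[OF assms(2)] by measurable
  show ?thesis by (rule int_M(1)[OF m sqb_fin_prod[OF assms]])
qed

lemma main:
  fixes vstar :: "nat \<Rightarrow> real"
  shows "let M = joint_law PL g D kstar;
             y = target D vstar;
             risk = (\<lambda>k v. \<integral>\<^sup>+ \<omega>. ennreal ((y \<omega> - softmax_pred D (fst \<omega>) k v (snd (snd \<omega>)))\<^sup>2) \<partial>M);
             bayes = (\<integral>\<^sup>+ \<omega>. ennreal ((y \<omega> - real_cond_exp M (obs_algebra M) y \<omega>)\<^sup>2) \<partial>M)
         in (\<exists>k v. risk k v = bayes) \<and> (\<forall>k v. bayes \<le> risk k v)"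
proof -
  define y where "y = target D vstar"
  define fs :: "nat \<times> nat \<times> (nat \<times> nat \<Rightarrow> real) \<Rightarrow> real" where "fs \<omega> = softmax_pred D (fst \<omega>) (\<lambda>d. c * kstar d) vstar (snd (snd \<omega>))" for \<omega>
  define F where "F = obs_algebra JL"
  define T where "T \<omega> = (fst \<omega>, snd (snd \<omega>))" for \<omega> :: "nat \<times> nat \<times> (nat \<times> nat \<Rightarrow> real)"
  define Ob :: "(nat \<times> (nat \<times> nat \<Rightarrow> real)) measure" where "Ob = (count_space UNIV \<Otimes>\<^sub>M PiM UNIV (\<lambda>_. (borel :: real measure)))"
  have Tm: "T \<in> measurable sample_space Ob"
    unfolding T_def Ob_def sample_space_def by measurable
  have FT: "F = vimage_algebra (space JL) T Ob"
    unfolding F_def obs_algebra_def T_def Ob_def ..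
  have subalg: "subalgebra JL F"
    unfolding subalgebra_def FT
    using sets_image_in_sets[OF refl meas_JL[OF Tm]] by simp
  have fm: "finite_measure (restr_to_subalg JL F)"
    by (rule finite_measure_restr_to_subalg[OF subalg]) (use M_prob in \<open>simp add: prob_space_def\<close>)
  have sfs_ax: "sigma_finite_subalgebra JL F"
    unfolding sigma_finite_subalgebra_def using subalg finite_measure.axioms(1)[OF fm] by blast
  interpret sfs: sigma_finite_subalgebra JL F by (rule sfs_ax)
  have sy: "sqb y (Wv D vstar)" unfolding y_def by (rule sqb_target)
  have sf: "sqb fs ((real Lbar)\<^sup>2 * Wv D vstar)" unfolding fs_def by (rule sqb_softmax)
  have fsF: "fs \<in> borel_measurable F"
  proof -
    have "(\<lambda>p. softmax_pred D (fst p) (\<lambda>d. c * kstar d) vstar (snd p)) \<in> borel_measurable Ob"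
      unfolding Ob_def by (rule softmax_meas_O)
    moreover have "T \<in> measurable F Ob" unfolding FT
      by (rule measurable_vimage_algebra1) (simp add: Ob_def space_pair_measure space_PiM)
    ultimately have "(\<lambda>p. softmax_pred D (fst p) (\<lambda>d. c * kstar d) vstar (snd p)) \<circ> T \<in> borel_measurable F"
      by (rule measurable_comp[rotated])
    then show ?thesis unfolding fs_def T_def comp_def by simp
  qed
  have ae: "AE \<omega> in JL. real_cond_exp JL F y \<omega> = fs \<omega>"
  proof (rule sfs.real_cond_exp_charact)
    show "integrable JL y" by (rule sqb_int[OF sy])
    show "integrable JL fs" by (rule sqb_int[OF sf])
    show "fs \<in> borel_measurable F" by (rule fsF)
    fix A assume A: "A \<in> sets F"
    then obtain B where B: "B \<in> sets Ob" and AB: "A = T -` B \<inter> space JL"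
      unfolding FT by (subst (asm) sets_vimage_algebra2) (auto simp: Ob_def space_pair_measure space_PiM)
    have AJ: "A \<in> sets JL" using A subalg by (auto simp: subalgebra_def)
    have Aind: "indicator A \<omega> = indicator B (T \<omega>)" for \<omega> :: "nat \<times> nat \<times> (nat \<times> nat \<Rightarrow> real)"
      unfolding AB by (simp add: indicator_def)
    let ?phi = "\<lambda>\<omega>. (target D vstar \<omega> - softmax_pred D (fst \<omega>) (\<lambda>d. c * kstar d) vstar (snd (snd \<omega>))) * indicator B (fst \<omega>, snd (snd \<omega>))"
    have sd: "sqb (\<lambda>\<omega>. y \<omega> - fs \<omega>) (2 * (Wv D vstar + (real Lbar)\<^sup>2 * Wv D vstar))" by (rule sqb_diff[OF sy sf])
    have phim: "?phi \<in> borel_measurable sample_space"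
    proof -
      have "(\<lambda>\<omega>. indicator B (T \<omega>) :: real) \<in> borel_measurable sample_space"
        using Tm B by measurable
      then show ?thesis using sqb_meas[OF sd] unfolding y_def fs_def T_def by measurable
    qed
    have phifin: "(\<integral>\<^sup>+\<omega>. ennreal \<bar>?phi \<omega>\<bar> \<partial>JL) < \<infinity>"
    proof (rule le_less_trans[OF _ sqb_fin_lin[OF sd]], rule nn_integral_mono)
      fix \<omega>
      show "ennreal \<bar>?phi \<omega>\<bar> \<le> ennreal \<bar>y \<omega> - fs \<omega>\<bar>"
        unfolding y_def fs_def by (intro ennreal_leI) (simp add: abs_mult indicator_def)
    qed
    have cz: "integral\<^sup>L JL ?phi = 0" by (rule cross_zero(2)[OF phim phifin])
    have iy: "integrable JL (\<lambda>\<omega>. indicator A \<omega> *\<^sub>R y \<omega>)" by (rule integrable_mult_indicator[OF AJ sqb_int[OF sy]])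
    have ifs: "integrable JL (\<lambda>\<omega>. indicator A \<omega> *\<^sub>R fs \<omega>)" by (rule integrable_mult_indicator[OF AJ sqb_int[OF sf]])
    have "(\<integral>\<omega>\<in>A. y \<omega> \<partial>JL) - (\<integral>\<omega>\<in>A. fs \<omega> \<partial>JL) = (\<integral>\<omega>. indicator A \<omega> *\<^sub>R y \<omega> - indicator A \<omega> *\<^sub>R fs \<omega> \<partial>JL)"
      unfolding set_lebesgue_integral_def using iy ifs by simp
    also have "\<dots> = integral\<^sup>L JL ?phi"
      by (intro Bochner_Integration.integral_cong refl) (simp add: Aind T_def y_def fs_def algebra_simps)
    finally show "(\<integral>\<omega>\<in>A. y \<omega> \<partial>JL) = (\<integral>\<omega>\<in>A. fs \<omega> \<partial>JL)" using cz by simp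
  qed
  have bayes: "(\<integral>\<^sup>+ \<omega>. ennreal ((y \<omega> - real_cond_exp JL F y \<omega>)\<^sup>2) \<partial>JL) = (\<integral>\<^sup>+ \<omega>. ennreal ((y \<omega> - fs \<omega>)\<^sup>2) \<partial>JL)"
    using ae by (intro nn_integral_cong_AE) auto
  have le: "(\<integral>\<^sup>+ \<omega>. ennreal ((y \<omega> - fs \<omega>)\<^sup>2) \<partial>JL) \<le>
      (\<integral>\<^sup>+ \<omega>. ennreal ((y \<omega> - softmax_pred D (fst \<omega>) k v (snd (snd \<omega>)))\<^sup>2) \<partial>JL)" for k v
  proof -
    define fk :: "nat \<times> nat \<times> (nat \<times> nat \<Rightarrow> real) \<Rightarrow> real" where "fk \<omega> = softmax_pred D (fst \<omega>) k v (snd (snd \<omega>))" for \<omega>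
    have sk: "sqb fk ((real Lbar)\<^sup>2 * Wv D v)" unfolding fk_def by (rule sqb_softmax)
    have s1: "sqb (\<lambda>\<omega>. y \<omega> - fs \<omega>) (2 * (Wv D vstar + (real Lbar)\<^sup>2 * Wv D vstar))" by (rule sqb_diff[OF sy sf])
    have s2: "sqb (\<lambda>\<omega>. fs \<omega> - fk \<omega>) (2 * ((real Lbar)\<^sup>2 * Wv D vstar + (real Lbar)\<^sup>2 * Wv D v))" by (rule sqb_diff[OF sf sk])
    have s3: "sqb (\<lambda>\<omega>. y \<omega> - fk \<omega>) (2 * (Wv D vstar + (real Lbar)\<^sup>2 * Wv D v))" by (rule sqb_diff[OF sy sk])
    let ?h = "\<lambda>p. softmax_pred D (fst p) (\<lambda>d. c * kstar d) vstar (snd p) - softmax_pred D (fst p) k v (snd p)"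
    have ceq: "(\<lambda>\<omega>. (target D vstar \<omega> - softmax_pred D (fst \<omega>) (\<lambda>d. c * kstar d) vstar (snd (snd \<omega>))) * ?h (fst \<omega>, snd (snd \<omega>)))
        = (\<lambda>\<omega>. (y \<omega> - fs \<omega>) * (fs \<omega> - fk \<omega>))"
      by (simp add: y_def fs_def fk_def)
    have pm: "(\<lambda>\<omega>. (y \<omega> - fs \<omega>) * (fs \<omega> - fk \<omega>)) \<in> borel_measurable sample_space"
      using sqb_meas[OF s1] sqb_meas[OF s2] by measurable
    have cz: "integral\<^sup>L JL (\<lambda>\<omega>. (y \<omega> - fs \<omega>) * (fs \<omega> - fk \<omega>)) = 0"
      using cross_zero(2)[where h="?h" and v=vstar] pm sqb_fin_prod[OF s1 s2] unfolding y_def fs_def fk_def by simp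
    have i1: "integrable JL (\<lambda>\<omega>. (y \<omega> - fs \<omega>)\<^sup>2)" by (rule sqb_int_sq[OF s1])
    have i2: "integrable JL (\<lambda>\<omega>. (fs \<omega> - fk \<omega>)\<^sup>2)" by (rule sqb_int_sq[OF s2])
    have i3: "integrable JL (\<lambda>\<omega>. (y \<omega> - fk \<omega>)\<^sup>2)" by (rule sqb_int_sq[OF s3])
    have i4: "integrable JL (\<lambda>\<omega>. (y \<omega> - fs \<omega>) * (fs \<omega> - fk \<omega>))" by (rule sqb_int_prod[OF s1 s2])
    have "(\<integral>\<omega>. (y \<omega> - fk \<omega>)\<^sup>2 \<partial>JL) = (\<integral>\<omega>. (y \<omega> - fs \<omega>)\<^sup>2 + ((fs \<omega> - fk \<omega>)\<^sup>2 + 2 * ((y \<omega> - fs \<omega>) * (fs \<omega> - fk \<omega>))) \<partial>JL)"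
      by (intro Bochner_Integration.integral_cong refl) (simp add: power2_eq_square algebra_simps)
    also have "\<dots> = (\<integral>\<omega>. (y \<omega> - fs \<omega>)\<^sup>2 \<partial>JL) + ((\<integral>\<omega>. (fs \<omega> - fk \<omega>)\<^sup>2 \<partial>JL) + 2 * integral\<^sup>L JL (\<lambda>\<omega>. (y \<omega> - fs \<omega>) * (fs \<omega> - fk \<omega>)))"
      using i1 i2 i4 by simp
    also have "\<dots> \<ge> (\<integral>\<omega>. (y \<omega> - fs \<omega>)\<^sup>2 \<partial>JL)"
      using cz by simp
    finally have r: "(\<integral>\<omega>. (y \<omega> - fs \<omega>)\<^sup>2 \<partial>JL) \<le> (\<integral>\<omega>. (y \<omega> - fk \<omega>)\<^sup>2 \<partial>JL)" .
    have "(\<integral>\<^sup>+ \<omega>. ennreal ((y \<omega> - fs \<omega>)\<^sup>2) \<partial>JL) = ennreal (\<integral>\<omega>. (y \<omega> - fs \<omega>)\<^sup>2 \<partial>JL)"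
      by (rule nn_integral_eq_integral[OF i1]) simp
    also have "\<dots> \<le> ennreal (\<integral>\<omega>. (y \<omega> - fk \<omega>)\<^sup>2 \<partial>JL)" by (rule ennreal_leI[OF r])
    also have "\<dots> = (\<integral>\<^sup>+ \<omega>. ennreal ((y \<omega> - fk \<omega>)\<^sup>2) \<partial>JL)"
      by (rule nn_integral_eq_integral[OF i3, symmetric]) simp
    finally show ?thesis unfolding fk_def .
  qed
  show ?thesis
    unfolding Let_def F_def[symmetric] y_def[symmetric]
  proof (intro conjI exI allI)
    show "(\<integral>\<^sup>+ \<omega>. ennreal ((y \<omega> - softmax_pred D (fst \<omega>) (\<lambda>d. c * kstar d) vstar (snd (snd \<omega>)))\<^sup>2) \<partial>JL)
       = (\<integral>\<^sup>+ \<omega>. ennreal ((y \<omega> - real_cond_exp JL F y \<omega>)\<^sup>2) \<partial>JL)"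
      unfolding bayes fs_def ..
    fix k v
    show "(\<integral>\<^sup>+ \<omega>. ennreal ((y \<omega> - real_cond_exp JL F y \<omega>)\<^sup>2) \<partial>JL)
       \<le> (\<integral>\<^sup>+ \<omega>. ennreal ((y \<omega> - softmax_pred D (fst \<omega>) k v (snd (snd \<omega>)))\<^sup>2) \<partial>JL)"
      unfolding bayes by (rule le)
  qed
qed

end

theorem proposition2:
  fixes D Lbar :: nat and PL :: "nat pmf"
    and g :: "nat \<Rightarrow> nat \<Rightarrow> (nat \<Rightarrow> real) \<Rightarrow> real"
    and c :: real and kstar vstar :: "nat \<Rightarrow> real"
  assumes D: "D \<ge> 1" and Lbar: "Lbar \<ge> 1"
    and PL: "set_pmf PL \<subseteq> {1..Lbar}"
    and g_meas: "\<And>L e. L \<ge> 1 \<Longrightarrow> e \<in> {1..L} \<Longrightarrow>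
        g L e \<in> borel_measurable (PiM {1..L} (\<lambda>_. (borel :: real measure)))"
    and g_nonneg: "\<And>L e ch. L \<ge> 1 \<Longrightarrow> e \<in> {1..L} \<Longrightarrow>
        ch \<in> PiE {1..L} (\<lambda>_. UNIV) \<Longrightarrow> g L e ch \<ge> 0"
    and g_density: "\<And>k L e. L \<ge> 1 \<Longrightarrow> e \<in> {1..L} \<Longrightarrow>
        (\<integral>\<^sup>+ X. ennreal (g L e (proj D L X k) * gauss_dens D L X) \<partial>leb_mat D L) = 1"
    and c: "c \<ge> 0"
    and g_ratio: "\<And>L e e' ch. L \<ge> 1 \<Longrightarrow> e \<in> {1..L} \<Longrightarrow> e' \<in> {1..L} \<Longrightarrow>
        ch \<in> PiE {1..L} (\<lambda>_. UNIV) \<Longrightarrow>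
        g L e ch / g L e' ch = exp (c * (ch e - ch e'))"
  shows "let M = joint_law PL g D kstar;
             y = target D vstar;
             risk = (\<lambda>k v. \<integral>\<^sup>+ \<omega>. ennreal ((y \<omega> - softmax_pred D (fst \<omega>) k v (snd (snd \<omega>)))\<^sup>2) \<partial>M);
             bayes = (\<integral>\<^sup>+ \<omega>. ennreal ((y \<omega> - real_cond_exp M (obs_algebra M) y \<omega>)\<^sup>2) \<partial>M)
         in (\<exists>k v. risk k v = bayes) \<and> (\<forall>k v. bayes \<le> risk k v)"
  proof -
  interpret setting D Lbar PL g c kstar
    by (rule setting.intro[OF D Lbar PL g_meas g_nonneg g_density c g_ratio])
  show ?thesis by (rule main)
qed

end
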